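(* Let $\hat{\mathbf{Z}}\in\mathbb{R}^{d\times d}$ be symmetric with $\hat{\mathbf{Z}}_{J,J}=\hat{\mathbf{z}}\hat{\mathbf{z}}^\top$. Suppose: (1) either $\mathrm{sign}(u_{1,i})=\mathrm{sign}(\hat x_i)$ for all $i\in J$, or $\mathrm{sign}(u_{1,i})=-\mathrm{sign}(\hat x_i)$ for all $i\in J$; (2) $(\mathbf{M}_{J^c,J}-\rho\hat{\mathbf{Z}}_{J^c,J})\hat{\mathbf{x}}=0$ and $\|\hat{\mathbf{Z}}_{J^c,J}\|_{\max}<1$; (3) $\lambda_1(\mathbf{M}_{J,J}-\rho\hat{\mathbf{z}}\hat{\mathbf{z}}^\top)=\lambda_1(\mathbf{M}-\rho\hat{\mathbf{Z}})$ and $\|\hat{\mathbf{Z}}_{J^c,J^c}\|_{\max}<1$; (4) $\lambda_1(\mathbf{M}_{J,J}-\rho\hat{\mathbf{z}}\hat{\mathbf{z}}^\top)>\lambda_2(\mathbf{M}_{J,J}-\rho\hat{\mathbf{z}}\hat{\mathbf{z}}^\top)$. Then the matrix $\hat{\mathbf{X}}$ with $\hat{\mathbf{X}}_{J,J}=\hat{\mathbf{x}}\hat{\mathbf{x}}^\top$ and zeros elsewhere is the unique optimal solution of the SDP problem, and $\mathrm{supp}(\mathrm{diag}(\hat{\mathbf{X}}))=J$.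
   Context: Setup. Let $d\ge2$. $\mathbf{M}^*\in\mathbb{R}^{d\times d}$ is symmetric with $\lambda_1(\mathbf{M}^* )>\lambda_2(\mathbf{M}^* )$; $\mathbf{u}_1$ is a unit eigenvector for $\lambda_1(\mathbf{M}^* )$; $J=\{i:u_{1,i}\ne0\}$, $s=|J|\ge2$, $J^c=[d]\setminus J$. $\mathbf{M}\in\mathbb{R}^{d\times d}$ is any symmetric matrix (the observed matrix), and $\rho>0$. For a symmetric matrix, $\lambda_k$ is its $k$-th largest eigenvalue. Sub-matrices $\mathbf{B}_{I,K}$ are rows in $I$, columns in $K$; $\|\mathbf{B}\|_{\max}=\max_{i,j}|B_{i,j}|$, $\|\mathbf{B}\|_{1,1}=\sum_{i,j}|B_{i,j}|$; $\mathrm{sign}(0)=0$. SDP problem: maximize $\langle\mathbf{M},\mathbf{X}\rangle-\rho\|\mathbf{X}\|_{1,1}$ over symmetric $\mathbf{X}\succeq0$ with $\mathrm{tr}(\mathbf{X})=1$. Witness objects: $\hat{\mathbf{z}}\in\mathbb{R}^J$ with $\hat z_i=\mathrm{sign}(u_{1,i})$; $\hat{\mathbf{x}}\in\mathbb{R}^J$ is a unit leading eigenvector of $\mathbf{M}_{J,J}-\rho\hat{\mathbf{z}}\hat{\mathbf{z}}^\top$. *)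

theory Defs
  imports "Jordan_Normal_Form.DL_Submatrix" "Jordan_Normal_Form.Char_Poly"
begin

(* eigenvalues of a (real, square) matrix with multiplicity, in decreasing order:
   the roots of the characteristic polynomial (all real for symmetric matrices) *)
definition eigs_desc :: "real mat \<Rightarrow> real list" where
  "eigs_desc A = rev (sorted_list_of_multiset (proots (char_poly A)))"

definition lam :: "nat \<Rightarrow> real mat \<Rightarrow> real" where
  "lam k A = eigs_desc A ! (k - 1)"

definition outer :: "real vec \<Rightarrow> real mat" where
  "outer v = mat (dim_vec v) (dim_vec v) (\<lambda>(i,j). v $ i * v $ j)"

definition psd :: "real mat \<Rightarrow> bool" where
  "psd X \<longleftrightarrow> (\<forall>v \<in> carrier_vec (dim_row X). 0 \<le> v \<bullet> (X *\<^sub>v v))"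

definition frob_inner :: "real mat \<Rightarrow> real mat \<Rightarrow> real" where
  "frob_inner A B = (\<Sum>i<dim_row A. \<Sum>j<dim_col A. A $$ (i,j) * B $$ (i,j))"

definition norm11 :: "real mat \<Rightarrow> real" where
  "norm11 A = (\<Sum>i<dim_row A. \<Sum>j<dim_col A. \<bar>A $$ (i,j)\<bar>)"

definition sdp_obj :: "real mat \<Rightarrow> real \<Rightarrow> real mat \<Rightarrow> real" where
  "sdp_obj M \<rho> X = frob_inner M X - \<rho> * norm11 X"

definition mtrace :: "real mat \<Rightarrow> real" where
  "mtrace A = (\<Sum>i<dim_row A. A $$ (i,i))"

definition sdp_feasible :: "nat \<Rightarrow> real mat \<Rightarrow> bool" where
  "sdp_feasible d X \<longleftrightarrow> X \<in> carrier_mat d d \<and> transpose_mat X = X \<and> psd X \<and> mtrace X = 1"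

definition sdp_unique_opt :: "nat \<Rightarrow> real mat \<Rightarrow> real \<Rightarrow> real mat \<Rightarrow> bool" where
  "sdp_unique_opt d M \<rho> X \<longleftrightarrow> sdp_feasible d X \<and>
     (\<forall>Y. sdp_feasible d Y \<and> Y \<noteq> X \<longrightarrow> sdp_obj M \<rho> Y < sdp_obj M \<rho> X)"

end

theory Submission
  imports Defs "HOL-Analysis.Function_Topology"
begin

definition qf :: "nat \<Rightarrow> (nat \<Rightarrow> nat \<Rightarrow> real) \<Rightarrow> (nat \<Rightarrow> real) \<Rightarrow> real" where
  "qf n C v = (\<Sum>i<n. \<Sum>j<n. v i * C i j * v j)"

definition symf :: "nat \<Rightarrow> (nat \<Rightarrow> nat \<Rightarrow> real) \<Rightarrow> bool" where
  "symf n C \<longleftrightarrow> (\<forall>i<n. \<forall>j<n. C i j = C j i)"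

lemma qf_add:
  assumes "symf n C"
  shows "qf n C (\<lambda>i. u i + t * w i) = qf n C u + 2 * t * (\<Sum>i<n. w i * (\<Sum>j<n. C i j * u j)) + t^2 * qf n C w"
proof -
  have swap: "(\<Sum>i<n. \<Sum>j<n. u i * C i j * w j) = (\<Sum>i<n. \<Sum>j<n. w i * C i j * u j)"
    by (subst sum.swap) (auto intro!: sum.cong simp: assms[unfolded symf_def])
  have "qf n C (\<lambda>i. u i + t * w i) = (\<Sum>i<n. \<Sum>j<n. u i * C i j * u j + t * (w i * C i j * u j) + t * (u i * C i j * w j) + t^2 * (w i * C i j * w j))"
    unfolding qf_def by (intro sum.cong refl) (simp add: algebra_simps power2_eq_square)
  also have "\<dots> = qf n C u + t * (\<Sum>i<n. \<Sum>j<n. w i * C i j * u j) + t * (\<Sum>i<n. \<Sum>j<n. u i * C i j * w j) + t^2 * qf n C w"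
    unfolding qf_def by (simp add: sum.distrib sum_distrib_left)
  also have "(\<Sum>i<n. \<Sum>j<n. w i * C i j * u j) = (\<Sum>i<n. w i * (\<Sum>j<n. C i j * u j))"
    by (simp add: sum_distrib_left mult.assoc)
  finally show ?thesis unfolding swap by (simp add: sum_distrib_left mult.assoc)
qed

lemma psd_null:
  assumes sym: "symf n C" and psd: "\<forall>v. 0 \<le> qf n C v" and z: "qf n C u = 0"
  shows "\<forall>i<n. (\<Sum>j<n. C i j * u j) = 0"
proof -
  define w where "w i = (\<Sum>j<n. C i j * u j)" for i
  define W where "W = (\<Sum>i<n. w i * w i)"
  define q where "q = qf n C w"
  have q0: "q \<ge> 0" using psd q_def by auto
  have W0: "W \<ge> 0" unfolding W_def by (auto intro: sum_nonneg)
  define t where "t = - W / (q + 1)"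
  have "0 \<le> qf n C (\<lambda>i. u i + t * w i)" using psd by auto
  also have "\<dots> = 2 * t * W + t^2 * q" unfolding qf_add[OF sym] z W_def q_def w_def by simp
  finally have h: "0 \<le> 2 * t * W + t^2 * q" .
  have "W = 0"
  proof (rule ccontr)
    assume "W \<noteq> 0" hence Wp: "W > 0" using W0 by auto
    have "2 * t * W + t^2 * q = W^2 * (- q - 2) / (q+1)^2"
      unfolding t_def using q0 by (simp add: field_simps power2_eq_square add_nonneg_eq_0_iff)
    also have "\<dots> < 0" using Wp q0 by (intro divide_neg_pos mult_pos_neg) auto
    finally show False using h by simp
  qed
  hence "\<forall>i\<in>{..<n}. w i * w i = 0" unfolding W_def
    by (subst (asm) sum_nonneg_eq_0_iff) auto
  thus ?thesis unfolding w_def by auto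
qed

lemma sum_unit_r:
  assumes "(p::nat) < n"
  shows "(\<Sum>j<n. f j * (if j = p then 1 else 0)) = (f p :: real)"
proof -
  have "(\<Sum>j<n. f j * (if j = p then 1 else 0)) = (\<Sum>j<n. if j = p then f j else 0)"
    by (rule sum.cong) auto
  thus ?thesis using assms by simp
qed

lemma qf_unit:
  assumes "p < n"
  shows "qf n C (\<lambda>j. if j = p then 1 else 0) = C p p"
proof -
  have "(\<Sum>i<n. \<Sum>j<n. (if i = p then 1 else 0) * C i j * (if j = p then 1 else 0))
     = (\<Sum>i<n. (if i = p then 1 else 0) * C i p)"
    using assms by (intro sum.cong refl) (rule sum_unit_r)
  also have "\<dots> = (\<Sum>i<n. C i p * (if i = p then 1 else 0))" by (simp add: mult.commute)
  also have "\<dots> = C p p" using sum_unit_r[OF assms] .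
  finally show ?thesis unfolding qf_def .
qed

lemma psd_diag_nonneg:
  assumes "\<forall>v. 0 \<le> qf n C v" "p < n" shows "0 \<le> C p p"
  using assms qf_unit[OF assms(2), of C] by metis

lemma psd_diag_zero:
  assumes sym: "symf n C" and psd: "\<forall>v. 0 \<le> qf n C v" and p: "p < n" and z: "C p p = 0"
    and j: "j < n"
  shows "C p j = 0" "C j p = 0"
proof -
  have "\<forall>i<n. (\<Sum>j<n. C i j * (if j = p then 1 else 0)) = 0"
    by (rule psd_null[OF sym psd]) (simp add: qf_unit[OF p] z)
  hence "C j p = 0" using j sum_unit_r[OF p, of "C j"] by simp
  thus "C j p = 0" "C p j = 0" using sym j p unfolding symf_def by auto
qed

lemma psd_decomp:
  "symf n Y \<Longrightarrow> (\<forall>v. 0 \<le> qf n Y v) \<Longrightarrow> \<exists>(m::nat) V. \<forall>i<n. \<forall>j<n. Y i j = (\<Sum>k<m. V k i * V k j)"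
proof (induction "card {i. i < n \<and> Y i i \<noteq> 0}" arbitrary: Y rule: less_induct)
  case less
  note sym = less.prems(1) and psd = less.prems(2)
  show ?case
  proof (cases "\<exists>p<n. Y p p \<noteq> 0")
    case False
    have "\<forall>i<n. \<forall>j<n. Y i j = 0"
    proof (intro allI impI)
      fix i j assume "i < n" "j < n"
      thus "Y i j = 0" using False psd_diag_zero(1)[OF sym psd, of i j] by blast
    qed
    hence "\<forall>i<n. \<forall>j<n. Y i j = (\<Sum>k<(0::nat). (\<lambda>k i. 0::real) k i * (\<lambda>k i. 0) k j)" by simp
    thus ?thesis by (intro exI)
  next
    case True
    then obtain p where p: "p < n" "Y p p \<noteq> 0" by auto
    have Ypp: "Y p p > 0" using psd_diag_nonneg[OF psd p(1)] p(2) by simp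
    define Y' where "Y' i j = Y i j - Y i p * Y p j / Y p p" for i j
    have sym': "symf n Y'" using sym p unfolding symf_def Y'_def by (auto simp: mult.commute)
    have psd': "\<forall>v. 0 \<le> qf n Y' v"
    proof
      fix v
      define a where "a = (\<Sum>j<n. Y p j * v j)"
      define e where "e j = (if j = p then (1::real) else 0)" for j
      have ea: "(\<Sum>i<n. e i * (\<Sum>j<n. Y i j * v j)) = a"
        unfolding a_def e_def using sum_unit_r[OF p(1), of "\<lambda>i. (\<Sum>j<n. Y i j * v j)"]
        by (simp add: mult.commute)
      have eq: "qf n Y e = Y p p" unfolding e_def by (rule qf_unit[OF p(1)])
      have "qf n Y (\<lambda>i. v i + (- a / Y p p) * e i) = qf n Y v + 2 * (- a / Y p p) * a + (- a / Y p p)^2 * Y p p"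
        unfolding qf_add[OF sym] ea eq by simp
      moreover have "2 * (- a / Y p p) * a + (- a / Y p p)^2 * Y p p = - (a^2 / Y p p)"
        using Ypp by (simp add: field_simps power2_eq_square)
      ultimately have 1: "qf n Y (\<lambda>i. v i + (- a / Y p p) * e i) = qf n Y v - a^2 / Y p p" by simp
      have "qf n Y' v = qf n Y v - a^2 / Y p p"
      proof -
        have t: "v i * Y' i j * v j = v i * Y i j * v j - (v i * Y i p) * (Y p j * v j) / Y p p" for i j
          unfolding Y'_def using Ypp by (simp add: field_simps)
        have "qf n Y' v = (\<Sum>i<n. \<Sum>j<n. v i * Y i j * v j - (v i * Y i p) * (Y p j * v j) / Y p p)"
          unfolding qf_def t ..
        also have "\<dots> = qf n Y v - (\<Sum>i<n. \<Sum>j<n. (v i * Y i p) * (Y p j * v j)) / Y p p"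
          unfolding qf_def sum_subtractf sum_divide_distrib ..
        also have "(\<Sum>i<n. \<Sum>j<n. (v i * Y i p) * (Y p j * v j)) = (\<Sum>i<n. v i * Y i p) * a"
          unfolding a_def by (rule sum_product[symmetric])
        also have "(\<Sum>i<n. v i * Y i p) = a" unfolding a_def
          using sym p(1) unfolding symf_def by (intro sum.cong refl) (auto simp: mult.commute)
        finally show ?thesis by (simp add: power2_eq_square)
      qed
      hence "qf n Y' v = qf n Y (\<lambda>i. v i + (- a / Y p p) * e i)" using 1 by simp
      thus "0 \<le> qf n Y' v" using psd by metis
    qed
    have sub: "{i. i < n \<and> Y' i i \<noteq> 0} \<subset> {i. i < n \<and> Y i i \<noteq> 0}"
    proof
      show "{i. i < n \<and> Y' i i \<noteq> 0} \<subseteq> {i. i < n \<and> Y i i \<noteq> 0}"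
      proof safe
        fix i assume i: "i < n" "Y' i i \<noteq> 0" "Y i i = 0"
        have "Y i p = 0" "Y p i = 0" using psd_diag_zero[OF sym psd i(1) i(3) p(1)] by auto
        thus False using i unfolding Y'_def by simp
      qed
      show "{i. i < n \<and> Y' i i \<noteq> 0} \<noteq> {i. i < n \<and> Y i i \<noteq> 0}"
      proof
        assume "{i. i < n \<and> Y' i i \<noteq> 0} = {i. i < n \<and> Y i i \<noteq> 0}"
        hence "Y' p p \<noteq> 0" using p by blast
        thus False unfolding Y'_def using Ypp by (simp add: power2_eq_square)
      qed
    qed
    have "card {i. i < n \<and> Y' i i \<noteq> 0} < card {i. i < n \<and> Y i i \<noteq> 0}"
      by (rule psubset_card_mono[OF _ sub]) auto
    from less.hyps[OF this sym' psd'] obtain m :: nat and V where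
      V: "\<forall>i<n. \<forall>j<n. Y' i j = (\<Sum>k<m. V k i * V k j)" by blast
    define V2 where "V2 k = (if k < m then V k else (\<lambda>i. Y i p / sqrt (Y p p)))" for k
    have "\<forall>i<n. \<forall>j<n. Y i j = (\<Sum>k<Suc m. V2 k i * V2 k j)"
    proof (intro allI impI)
      fix i j assume ij: "i < n" "j < n"
      have s: "(\<Sum>k<m. V2 k i * V2 k j) = (\<Sum>k<m. V k i * V k j)"
        unfolding V2_def by (intro sum.cong) auto
      have "Y i j = Y' i j + Y i p * Y p j / Y p p" unfolding Y'_def by simp
      also have "Y p j = Y j p" using sym ij p unfolding symf_def by auto
      also have "Y i p * Y j p / Y p p = V2 m i * V2 m j"
      proof -
        have "V2 m i * V2 m j = (Y i p * Y j p) / (sqrt (Y p p) * sqrt (Y p p))" unfolding V2_def by simp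
        also have "sqrt (Y p p) * sqrt (Y p p) = Y p p" using Ypp by simp
        finally show ?thesis by simp
      qed
      finally show "Y i j = (\<Sum>k<Suc m. V2 k i * V2 k j)" using V ij s by simp
    qed
    thus ?thesis by blast
  qed
qed

lemma rq_max:
  assumes n: "n > 0"
  shows "\<exists>u. (\<Sum>i<n. (u i)^2) = 1 \<and> (\<forall>v. (\<Sum>i<n. (v i)^2) = 1 \<longrightarrow> qf n C v \<le> qf n C u)"
proof -
  define T where "T i = (if i < n then {-1..1} else {0::real})" for i
  define S where "S = Pi UNIV T \<inter> {u. (\<Sum>i<n. (u i)^2) = 1}"
  have cT: "compactin euclideanreal (T i)" for i
    unfolding T_def compactin_euclidean_iff by auto
  have "compactin (product_topology (\<lambda>_. euclideanreal) UNIV) (PiE UNIV T)"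
    using cT by (simp add: compactin_PiE)
  hence "compact (Pi UNIV T)"
    by (simp add: euclidean_product_topology compactin_euclidean_iff PiE_UNIV_domain)
  moreover have "closed {u::nat\<Rightarrow>real. (\<Sum>i<n. (u i)^2) = 1}"
    by (intro closed_Collect_eq continuous_intros continuous_on_product_coordinates)
  ultimately have cS: "compact S" unfolding S_def by (rule compact_Int_closed)
  define e0 :: "nat \<Rightarrow> real" where "e0 j = (if j = 0 then 1 else (0::real))" for j
  have "(\<Sum>i<n. (e0 i)^2) = (\<Sum>i<n. if i = 0 then 1 else 0)"
    by (rule sum.cong) (auto simp: e0_def)
  also have "\<dots> = 1" using n by simp
  finally have "e0 \<in> S" unfolding S_def T_def using n by (auto simp: e0_def)
  hence neS: "S \<noteq> {}" by auto
  have cont: "continuous_on S (qf n C)"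
    unfolding qf_def by (intro continuous_intros continuous_on_subset[OF continuous_on_product_coordinates subset_UNIV])
  obtain u where u: "u \<in> S" "\<forall>y\<in>S. qf n C y \<le> qf n C u"
    using continuous_attains_sup[OF cS neS cont] by blast
  have "qf n C v \<le> qf n C u" if v: "(\<Sum>i<n. (v i)^2) = 1" for v
  proof -
    define v' where "v' i = (if i < n then v i else 0)" for i
    have q: "qf n C v' = qf n C v" unfolding qf_def v'_def by (intro sum.cong refl) auto
    have s': "(\<Sum>i<n. (v' i)^2) = 1" using v unfolding v'_def by simp
    have "v' i \<in> T i" for i
    proof (cases "i < n")
      case True
      have "(v i)^2 \<le> (\<Sum>i<n. (v i)^2)"
        by (rule member_le_sum) (use True in auto)
      hence "(v i)^2 \<le> 1" using v by simp
      hence "\<bar>v i\<bar> \<le> 1" using abs_le_square_iff[of "v i" 1] by simp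
      thus ?thesis using True unfolding T_def v'_def by auto
    qed (auto simp: T_def v'_def)
    hence "v' \<in> S" unfolding S_def using s' by auto
    thus ?thesis using u q by auto
  qed
  moreover have "(\<Sum>i<n. (u i)^2) = 1" using u unfolding S_def by auto
  ultimately show ?thesis by blast
qed

lemma qf_scale: "qf n C (\<lambda>i. c * v i) = c^2 * qf n C v"
  unfolding qf_def by (simp add: sum_distrib_left algebra_simps power2_eq_square)

lemma qf_diag_minus:
  "qf n (\<lambda>i j. \<mu> * (if i = j then 1 else 0) - C i j) v = \<mu> * (\<Sum>i<n. (v i)^2) - qf n C v"
proof -
  have "\<And>i. i < n \<Longrightarrow> (\<Sum>j<n. v i * (\<mu> * (if i = j then 1 else 0)) * v j) = \<mu> * (v i)^2"
  proof -
    fix i assume i: "i < n"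
    have "(\<Sum>j<n. v i * (\<mu> * (if i = j then 1 else 0)) * v j) = (\<Sum>j<n. if j = i then \<mu> * (v i)^2 else 0)"
      by (rule sum.cong) (auto simp: power2_eq_square)
    thus "(\<Sum>j<n. v i * (\<mu> * (if i = j then 1 else 0)) * v j) = \<mu> * (v i)^2" using i by simp
  qed
  hence "(\<Sum>i<n. \<Sum>j<n. v i * (\<mu> * (if i = j then 1 else 0)) * v j) = (\<Sum>i<n. \<mu> * (v i)^2)"
    by (intro sum.cong) auto
  moreover have "qf n (\<lambda>i j. \<mu> * (if i = j then 1 else 0) - C i j) v
     = (\<Sum>i<n. \<Sum>j<n. v i * (\<mu> * (if i = j then 1 else 0)) * v j) - qf n C v"
    unfolding qf_def by (simp add: sum_subtractf algebra_simps)
  ultimately show ?thesis by (simp add: sum_distrib_left)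
qed

lemma rq_fun:
  assumes n: "n > 0" and sym: "symf n C"
  shows "\<exists>u \<mu>. (\<Sum>i<n. (u i)^2) = 1 \<and> (\<forall>i<n. (\<Sum>j<n. C i j * u j) = \<mu> * u i)
            \<and> (\<forall>v. qf n C v \<le> \<mu> * (\<Sum>i<n. (v i)^2))"
proof -
  obtain u where u1: "(\<Sum>i<n. (u i)^2) = 1" and um: "\<forall>v. (\<Sum>i<n. (v i)^2) = 1 \<longrightarrow> qf n C v \<le> qf n C u"
    using rq_max[OF n] by blast
  define \<mu> where "\<mu> = qf n C u"
  have bound: "qf n C v \<le> \<mu> * (\<Sum>i<n. (v i)^2)" for v
  proof (cases "(\<Sum>i<n. (v i)^2) = 0")
    case True
    hence "\<forall>i\<in>{..<n}. (v i)^2 = 0" by (subst (asm) sum_nonneg_eq_0_iff) auto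
    hence "qf n C v = 0" unfolding qf_def by simp
    thus ?thesis using True by simp
  next
    case False
    define s where "s = (\<Sum>i<n. (v i)^2)"
    have sp: "s > 0" using False unfolding s_def by (metis less_eq_real_def sum_nonneg zero_le_power2)
    define w where "w i = (1 / sqrt s) * v i" for i
    have "(\<Sum>i<n. (w i)^2) = (\<Sum>i<n. (v i)^2) / s"
      unfolding w_def using sp by (simp add: power_mult_distrib sum_divide_distrib field_simps)
    hence "(\<Sum>i<n. (w i)^2) = 1" using sp unfolding s_def by simp
    hence "qf n C w \<le> \<mu>" using um \<mu>_def by simp
    moreover have "qf n C w = qf n C v / s"
      unfolding w_def qf_scale using sp by (simp add: power_divide)
    ultimately have "qf n C v / s \<le> \<mu>" by simp
    thus ?thesis using sp unfolding s_def by (simp add: divide_le_eq mult.commute)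
  qed
  define D where "D i j = \<mu> * (if i = j then 1 else 0) - C i j" for i j
  have symD: "symf n D" using sym unfolding symf_def D_def by auto
  have psdD: "\<forall>v. 0 \<le> qf n D v" unfolding D_def qf_diag_minus using bound by simp
  have zD: "qf n D u = 0" unfolding D_def qf_diag_minus u1 \<mu>_def by simp
  have ev: "\<forall>i<n. (\<Sum>j<n. C i j * u j) = \<mu> * u i"
  proof (intro allI impI)
    fix i assume i: "i < n"
    have "(\<Sum>j<n. D i j * u j) = 0" using psd_null[OF symD psdD zD] i by blast
    moreover have "(\<Sum>j<n. D i j * u j) = (\<Sum>j<n. (if j = i then \<mu> * u i else 0)) - (\<Sum>j<n. C i j * u j)"
      unfolding D_def sum_subtractf[symmetric] by (intro sum.cong) (auto simp: algebra_simps)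
    ultimately show "(\<Sum>j<n. C i j * u j) = \<mu> * u i" using i by simp
  qed
  show ?thesis using u1 ev bound by blast
qed

lemma sp_sum: "w \<in> carrier_vec n \<Longrightarrow> v \<bullet> w = (\<Sum>i<n. v $ i * w $ i)"
  unfolding scalar_prod_def by (simp add: atLeast0LessThan)

lemma mv_index:
  assumes "A \<in> carrier_mat n m" "v \<in> carrier_vec m" "i < n"
  shows "(A *\<^sub>v v) $ i = (\<Sum>j<m. A $$ (i,j) * v $ j)"
proof -
  have "(A *\<^sub>v v) $ i = row A i \<bullet> v" using assms by simp
  also have "\<dots> = (\<Sum>j<m. row A i $ j * v $ j)" by (rule sp_sum[OF assms(2)])
  also have "\<dots> = (\<Sum>j<m. A $$ (i,j) * v $ j)" using assms by (intro sum.cong refl) auto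
  finally show ?thesis .
qed

lemma quad_qf:
  assumes "A \<in> carrier_mat n n" "v \<in> carrier_vec n"
  shows "v \<bullet> (A *\<^sub>v v) = qf n (\<lambda>i j. A $$ (i,j)) (\<lambda>i. v $ i)"
proof -
  have "v \<bullet> (A *\<^sub>v v) = (\<Sum>i<n. v $ i * (A *\<^sub>v v) $ i)" using assms by (simp add: sp_sum[of _ n])
  also have "\<dots> = (\<Sum>i<n. v $ i * (\<Sum>j<n. A $$ (i,j) * v $ j))"
    by (intro sum.cong refl) (simp add: mv_index[OF assms(1,2)])
  also have "\<dots> = qf n (\<lambda>i j. A $$ (i,j)) (\<lambda>i. v $ i)"
    unfolding qf_def by (simp add: sum_distrib_left mult.assoc)
  finally show ?thesis .
qed

lemma symf_mat:
  assumes "A \<in> carrier_mat n n" "transpose_mat A = A"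
  shows "symf n (\<lambda>i j. A $$ (i,j))"
  unfolding symf_def
proof (intro allI impI)
  fix i j assume "i < n" "j < n"
  hence "transpose_mat A $$ (i,j) = A $$ (j,i)" using assms(1) by simp
  thus "A $$ (i,j) = A $$ (j,i)" using assms(2) by simp
qed

lemma char_poly_nz: "A \<in> carrier_mat n n \<Longrightarrow> char_poly (A :: real mat) \<noteq> 0"
  using degree_monic_char_poly[of A n] by auto

lemma eigs_sorted: "sorted_wrt (\<ge>) (eigs_desc A)"
  unfolding eigs_desc_def by (simp add: sorted_wrt_rev)

lemma mset_eigs: "mset (eigs_desc A) = proots (char_poly A)"
  unfolding eigs_desc_def by simp

lemma lam1_ge_root:
  assumes A: "A \<in> carrier_mat n n" and r: "poly (char_poly A) \<mu> = 0"
  shows "\<mu> \<le> lam 1 A"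
proof -
  have "\<mu> \<in># proots (char_poly A)" using r char_poly_nz[OF A] by simp
  hence mem: "\<mu> \<in> set (eigs_desc A)" using mset_eigs[of A] by (metis set_mset_mset)
  then obtain a rest where L: "eigs_desc A = a # rest" by (cases "eigs_desc A") auto
  have "\<forall>y\<in>set rest. y \<le> a" using eigs_sorted[of A] unfolding L by simp
  hence "\<mu> \<le> a" using mem unfolding L by auto
  thus ?thesis unfolding lam_def L by simp
qed

lemma lam2_eq:
  assumes A: "A \<in> carrier_mat n n" and c: "count (proots (char_poly A)) (lam 1 A) \<ge> 2"
  shows "lam 2 A = lam 1 A"
proof -
  let ?L = "eigs_desc A"
  have cL: "count (mset ?L) (lam 1 A) \<ge> 2" using c mset_eigs[of A] by simp
  have "\<exists>a b rest. ?L = a # b # rest"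
  proof (cases ?L)
    case Nil thus ?thesis using cL by simp
  next
    case (Cons a t)
    show ?thesis
    proof (cases t)
      case Nil
      have "count (mset ?L) (lam 1 A) \<le> 1" unfolding Cons Nil by simp
      thus ?thesis using cL by simp
    qed (use Cons in auto)
  qed
  then obtain a b rest where L: "?L = a # b # rest" by blast
  have a: "lam 1 A = a" unfolding lam_def L by simp
  have sw: "sorted_wrt (\<ge>) (a # b # rest)" using eigs_sorted[of A] unfolding L .
  show ?thesis
  proof (rule ccontr)
    assume "lam 2 A \<noteq> lam 1 A"
    hence "b \<noteq> a" unfolding lam_def L by simp
    moreover have "b \<le> a" using sw by simp
    ultimately have "b < a" by simp
    moreover have "\<forall>y\<in>set rest. y \<le> b" using sw by simp
    ultimately have "a \<notin> set (b # rest)" by auto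
    hence "count (mset (a # b # rest)) a = 1" by (simp add: count_eq_zero_iff)
    thus False using cL unfolding L a by simp
  qed
qed

lemma rq_lam1:
  assumes A: "A \<in> carrier_mat n n" and sym: "transpose_mat A = A" and n: "n > 0"
  shows "qf n (\<lambda>i j. A $$ (i,j)) v \<le> lam 1 A * (\<Sum>i<n. (v i)^2)"
proof -
  obtain u \<mu> where u1: "(\<Sum>i<n. (u i)^2) = 1"
    and ev: "\<forall>i<n. (\<Sum>j<n. A $$ (i,j) * u j) = \<mu> * u i"
    and bd: "\<forall>v. qf n (\<lambda>i j. A $$ (i,j)) v \<le> \<mu> * (\<Sum>i<n. (v i)^2)"
    using rq_fun[OF n symf_mat[OF A sym]] by blast
  define x where "x = vec n u"
  have x: "x \<in> carrier_vec n" unfolding x_def by simp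
  have "A *\<^sub>v x = \<mu> \<cdot>\<^sub>v x"
  proof (rule eq_vecI)
    fix i assume "i < dim_vec (\<mu> \<cdot>\<^sub>v x)"
    hence i: "i < n" using x by simp
    have "(A *\<^sub>v x) $ i = (\<Sum>j<n. A $$ (i,j) * x $ j)" by (rule mv_index[OF A x i])
    also have "\<dots> = (\<Sum>j<n. A $$ (i,j) * u j)" unfolding x_def by (intro sum.cong refl) simp
    also have "\<dots> = (\<mu> \<cdot>\<^sub>v x) $ i" using ev i unfolding x_def by simp
    finally show "(A *\<^sub>v x) $ i = (\<mu> \<cdot>\<^sub>v x) $ i" .
  qed (use A x in auto)
  moreover have "x \<noteq> 0\<^sub>v n"
  proof
    assume "x = 0\<^sub>v n"
    hence "\<forall>i<n. u i = 0" unfolding x_def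
    proof (intro allI impI)
      fix i assume "vec n u = 0\<^sub>v n" "i < n"
      hence "vec n u $ i = 0\<^sub>v n $ i" by simp
      thus "u i = 0" using \<open>i < n\<close> by simp
    qed
    hence "(\<Sum>i<n. (u i)^2) = 0" by simp
    thus False using u1 by simp
  qed
  ultimately have "eigenvalue A \<mu>" unfolding eigenvalue_def eigenvector_def using x A by auto
  hence "poly (char_poly A) \<mu> = 0" using eigenvalue_root_char_poly[OF A] by simp
  hence "\<mu> \<le> lam 1 A" by (rule lam1_ge_root[OF A])
  moreover have "0 \<le> (\<Sum>i<n. (v i)^2)" by (auto intro: sum_nonneg)
  ultimately have "\<mu> * (\<Sum>i<n. (v i)^2) \<le> lam 1 A * (\<Sum>i<n. (v i)^2)" by (rule mult_right_mono)
  moreover have "qf n (\<lambda>i j. A $$ (i,j)) v \<le> \<mu> * (\<Sum>i<n. (v i)^2)" using bd by blast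
  ultimately show ?thesis by linarith
qed

lemma ev_fun:
  assumes A: "A \<in> carrier_mat n n" and x: "x \<in> carrier_vec n" and ex: "A *\<^sub>v x = \<mu> \<cdot>\<^sub>v x"
  shows "\<forall>r<n. (\<Sum>j<n. A $$ (r,j) * x $ j) = \<mu> * x $ r"
proof (intro allI impI)
  fix r assume r: "r < n"
  have "(A *\<^sub>v x) $ r = (\<Sum>j<n. A $$ (r,j) * x $ j)" by (rule mv_index[OF A x r])
  moreover have "(A *\<^sub>v x) $ r = \<mu> * x $ r" using ex r x by simp
  ultimately show "(\<Sum>j<n. A $$ (r,j) * x $ j) = \<mu> * x $ r" by simp
qed

lemma delete_eigen:
  fixes A :: "real mat"
  assumes A: "A \<in> carrier_mat (Suc m) (Suc m)" and i: "i < Suc m"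
    and ev: "\<forall>r<Suc m. (\<Sum>j<Suc m. A $$ (r,j) * y j) = \<mu> * y r"
    and yi: "y i = 0" and nz: "r0 < Suc m" "y r0 \<noteq> 0"
  shows "poly (char_poly (mat_delete A i i)) \<mu> = 0"
proof -
  define D where "D = mat_delete A i i"
  have D: "D \<in> carrier_mat m m" unfolding D_def using mat_delete_carrier[OF A] by simp
  define z where "z = vec m (\<lambda>c. y (insert_index i c))"
  have z: "z \<in> carrier_vec m" unfolding z_def by simp
  have inj: "inj_on (insert_index i) {0..<m}" unfolding insert_index_def inj_on_def by auto
  have img: "insert_index i ` {0..<m} = {0..<Suc m} - {i}" by (rule insert_index_image[OF i])
  have "D *\<^sub>v z = \<mu> \<cdot>\<^sub>v z"
  proof (rule eq_vecI)
    fix c assume "c < dim_vec (\<mu> \<cdot>\<^sub>v z)"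
    hence c: "c < m" using z by simp
    have ic: "insert_index i c < Suc m" using c unfolding insert_index_def by auto
    have "(D *\<^sub>v z) $ c = (\<Sum>c'<m. D $$ (c,c') * z $ c')" by (rule mv_index[OF D z c])
    also have "\<dots> = (\<Sum>c'\<in>{0..<m}. A $$ (insert_index i c, insert_index i c') * y (insert_index i c'))"
      unfolding D_def z_def
      by (intro sum.cong) (auto simp: mat_delete_index[OF A i i c])
    also have "\<dots> = (\<Sum>j\<in>insert_index i ` {0..<m}. A $$ (insert_index i c, j) * y j)"
      by (rule sum.reindex[OF inj, symmetric, unfolded comp_def])
    also have "\<dots> = (\<Sum>j\<in>{0..<Suc m} - {i}. A $$ (insert_index i c, j) * y j)" unfolding img ..
    also have "\<dots> = (\<Sum>j\<in>{0..<Suc m}. A $$ (insert_index i c, j) * y j)"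
      using yi i by (intro sum.mono_neutral_left) auto
    also have "\<dots> = \<mu> * y (insert_index i c)" using ev ic by (simp add: atLeast0LessThan)
    also have "\<dots> = (\<mu> \<cdot>\<^sub>v z) $ c" unfolding z_def using c by simp
    finally show "(D *\<^sub>v z) $ c = (\<mu> \<cdot>\<^sub>v z) $ c" .
  qed (use D z in auto)
  moreover have "z \<noteq> 0\<^sub>v m"
  proof
    assume z0: "z = 0\<^sub>v m"
    have r0i: "r0 \<noteq> i" using nz yi by auto
    define c where "c = (if r0 < i then r0 else r0 - 1)"
    have c: "c < m" "insert_index i c = r0" unfolding c_def insert_index_def using r0i nz(1) i by auto
    have "z $ c = y r0" unfolding z_def using c by simp
    moreover have "z $ c = 0" using z0 c by simp
    ultimately show False using nz by simp
  qed
  ultimately have "eigenvalue D \<mu>" unfolding eigenvalue_def eigenvector_def using z D by auto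
  thus ?thesis using eigenvalue_root_char_poly[OF D] unfolding D_def by simp
qed

lemma mult2:
  fixes A :: "real mat"
  assumes A: "A \<in> carrier_mat n n" and x: "x \<in> carrier_vec n" and w: "w \<in> carrier_vec n"
    and ex: "A *\<^sub>v x = \<mu> \<cdot>\<^sub>v x" and ew: "A *\<^sub>v w = \<mu> \<cdot>\<^sub>v w"
    and xx: "x \<bullet> x \<noteq> 0" and ww: "w \<bullet> w \<noteq> 0" and xw: "x \<bullet> w = 0"
  shows "count (proots (char_poly A)) \<mu> \<ge> 2"
proof -
  have n: "n > 0"
  proof (rule ccontr)
    assume "\<not> n > 0" hence "n = 0" by simp
    hence "x \<bullet> x = 0" using sp_sum[OF x, of x] by simp
    thus False using xx by simp
  qed
  then obtain m where nm: "n = Suc m" by (cases n) auto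
  have exf: "\<forall>r<n. (\<Sum>j<n. A $$ (r,j) * x $ j) = \<mu> * x $ r" by (rule ev_fun[OF A x ex])
  have ewf: "\<forall>r<n. (\<Sum>j<n. A $$ (r,j) * w $ j) = \<mu> * w $ r" by (rule ev_fun[OF A w ew])
  have del: "poly (char_poly (mat_delete A i i)) \<mu> = 0" if i: "i < n" for i
  proof -
    define y where "y r = (if x $ i = 0 then x $ r else w $ i * x $ r - x $ i * w $ r)" for r
    have ev: "\<forall>r<n. (\<Sum>j<n. A $$ (r,j) * y j) = \<mu> * y r"
    proof (intro allI impI)
      fix r assume r: "r < n"
      show "(\<Sum>j<n. A $$ (r,j) * y j) = \<mu> * y r"
      proof (cases "x $ i = 0")
        case True thus ?thesis unfolding y_def using exf r by simp
      next
        case False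
        have "(\<Sum>j<n. A $$ (r,j) * y j) = w $ i * (\<Sum>j<n. A $$ (r,j) * x $ j) - x $ i * (\<Sum>j<n. A $$ (r,j) * w $ j)"
          unfolding y_def using False by (simp add: sum_distrib_left sum_subtractf algebra_simps)
        also have "\<dots> = \<mu> * y r" using exf ewf r False unfolding y_def by (simp add: algebra_simps)
        finally show ?thesis .
      qed
    qed
    have yi: "y i = 0" unfolding y_def by simp
    have "\<exists>r<n. y r \<noteq> 0"
    proof (cases "x $ i = 0")
      case True
      show ?thesis
      proof (rule ccontr)
        assume "\<not> ?thesis"
        hence "\<forall>r<n. x $ r = 0" using True unfolding y_def by auto
        hence "x \<bullet> x = 0" using sp_sum[OF x, of x] by simp
        thus False using xx by simp
      qed
    next
      case False
      have "(\<Sum>r<n. y r * w $ r) = w $ i * (x \<bullet> w) - x $ i * (w \<bullet> w)"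
        unfolding y_def sp_sum[OF w] using False by (simp add: sum_distrib_left sum_subtractf algebra_simps)
      also have "\<dots> = - (x $ i * (w \<bullet> w))" using xw by simp
      also have "\<dots> \<noteq> 0" using False ww by simp
      finally have "(\<Sum>r<n. y r * w $ r) \<noteq> 0" .
      thus ?thesis by (metis (no_types, lifting) lessThan_iff mult_zero_left sum.neutral)
    qed
    then obtain r0 where r0: "r0 < n" "y r0 \<noteq> 0" by blast
    show ?thesis using delete_eigen[of A m i y \<mu> r0] A i ev yi r0 unfolding nm by simp
  qed
  let ?p = "char_poly A"
  have p0: "?p \<noteq> 0" by (rule char_poly_nz[OF A])
  have "eigenvalue A \<mu>"
  proof -
    have "x \<noteq> 0\<^sub>v n" using xx x by auto
    thus ?thesis unfolding eigenvalue_def eigenvector_def using x A ex by auto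
  qed
  hence root: "poly ?p \<mu> = 0" using eigenvalue_root_char_poly[OF A] by simp
  have "poly (pderiv ?p) \<mu> = (\<Sum>i<n. poly (char_poly (mat_delete A i i)) \<mu>)"
    unfolding pderiv_char_poly[OF A] poly_sum ..
  also have "\<dots> = 0" using del by simp
  finally have droot: "poly (pderiv ?p) \<mu> = 0" .
  have "degree ?p = n" using degree_monic_char_poly[OF A] by simp
  hence dp0: "pderiv ?p \<noteq> 0" using n by (simp add: pderiv_eq_0_iff)
  have "order \<mu> (pderiv ?p) \<noteq> 0" using droot dp0 order_root by blast
  hence "order \<mu> ?p \<ge> 2" using order_pderiv[OF p0 root] by simp
  thus ?thesis using p0 by simp
qed

lemma sgn_mul_self: "sgn (x::real) * x = \<bar>x\<bar>"
  by (simp add: sgn_if)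

lemma pick_facts:
  assumes fin: "finite J"
  shows "\<And>k. k < card J \<Longrightarrow> pick J k \<in> J"
    and "inj_on (pick J) {..<card J}"
    and "pick J ` {..<card J} = J"
    and "\<And>k. k < card J \<Longrightarrow> card {a\<in>J. a < pick J k} = k"
    and "\<And>i. i \<in> J \<Longrightarrow> card {a\<in>J. a < i} < card J \<and> pick J (card {a\<in>J. a < i}) = i"
proof -
  show pin: "\<And>k. k < card J \<Longrightarrow> pick J k \<in> J" by (rule pick_in_set) simp
  show inj: "inj_on (pick J) {..<card J}"
    unfolding inj_on_def by (metis lessThan_iff linorder_neqE_nat pick_mono order_less_irrefl)
  have "pick J ` {..<card J} \<subseteq> J" using pin by auto
  moreover have "card (pick J ` {..<card J}) = card J" using card_image[OF inj] by simp
  ultimately show "pick J ` {..<card J} = J" using card_subset_eq[OF fin] by blast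
  show "\<And>k. k < card J \<Longrightarrow> card {a\<in>J. a < pick J k} = k" by (rule card_pick) simp
  fix i assume i: "i \<in> J"
  have "{a\<in>J. a < i} \<subset> J" using i by auto
  hence "card {a\<in>J. a < i} < card J" using fin by (simp add: psubset_card_mono)
  thus "card {a\<in>J. a < i} < card J \<and> pick J (card {a\<in>J. a < i}) = i"
    using pick_card_in_set[OF i] by simp
qed

lemma sum_J:
  assumes fin: "finite J" and sub: "J \<subseteq> {..<d}" and z: "\<forall>i<d. i \<notin> J \<longrightarrow> g i = 0"
  shows "(\<Sum>i<d. g i) = (\<Sum>k<card J. g (pick J k))"
proof -
  have "(\<Sum>i<d. g i) = (\<Sum>i\<in>J. g i)"
    using sub z by (intro sum.mono_neutral_right) auto
  also have "\<dots> = (\<Sum>i\<in>pick J ` {..<card J}. g i)" using pick_facts(3)[OF fin] by simp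
  also have "\<dots> = (\<Sum>k<card J. g (pick J k))"
    by (rule sum.reindex[OF pick_facts(2)[OF fin], unfolded comp_def])
  finally show ?thesis .
qed

lemma sum_J2:
  assumes fin: "finite J" and sub: "J \<subseteq> {..<d}" and z: "\<forall>i<d. \<forall>j<d. i \<notin> J \<or> j \<notin> J \<longrightarrow> f i j = 0"
  shows "(\<Sum>i<d. \<Sum>j<d. f i j) = (\<Sum>k<card J. \<Sum>l<card J. f (pick J k) (pick J l))"
proof -
  have "(\<Sum>i<d. \<Sum>j<d. f i j) = (\<Sum>k<card J. \<Sum>j<d. f (pick J k) j)"
    using z by (intro sum_J[OF fin sub]) auto
  also have "\<dots> = (\<Sum>k<card J. \<Sum>l<card J. f (pick J k) (pick J l))"
  proof (rule sum.cong[OF refl])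
    fix k assume "k \<in> {..<card J}"
    hence "pick J k \<in> J" using pick_facts(1)[OF fin] by simp
    hence "\<forall>j<d. j \<notin> J \<longrightarrow> f (pick J k) j = 0" using z sub by auto
    thus "(\<Sum>j<d. f (pick J k) j) = (\<Sum>l<card J. f (pick J k) (pick J l))"
      by (rule sum_J[OF fin sub])
  qed
  finally show ?thesis .
qed

lemma qf_cong: "(\<forall>i<n. v i = w i) \<Longrightarrow> qf n C v = qf n C w"
  unfolding qf_def by (intro sum.cong refl) auto

lemma frob_decomp:
  assumes Y: "\<forall>i<n. \<forall>j<n. Y i j = (\<Sum>m<K. V m i * V m j)"
  shows "(\<Sum>i<n. \<Sum>j<n. C i j * Y i j) = (\<Sum>m<K. qf n C (V m))"
    and "(\<Sum>i<n. Y i i) = (\<Sum>m<K. \<Sum>i<n. (V m i)^2)"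
proof -
  have "(\<Sum>i<n. \<Sum>j<n. C i j * Y i j) = (\<Sum>i<n. \<Sum>j<n. \<Sum>m<K. V m i * C i j * V m j)"
    using Y by (intro sum.cong refl) (simp add: sum_distrib_left algebra_simps)
  also have "\<dots> = (\<Sum>m<K. qf n C (V m))"
    unfolding qf_def by (subst sum.swap, subst (2) sum.swap) (rule refl)
  finally show "(\<Sum>i<n. \<Sum>j<n. C i j * Y i j) = (\<Sum>m<K. qf n C (V m))" .
  have "(\<Sum>i<n. Y i i) = (\<Sum>i<n. \<Sum>m<K. (V m i)^2)"
    using Y by (intro sum.cong refl) (simp add: power2_eq_square)
  also have "\<dots> = (\<Sum>m<K. \<Sum>i<n. (V m i)^2)" by (rule sum.swap)
  finally show "(\<Sum>i<n. Y i i) = (\<Sum>m<K. \<Sum>i<n. (V m i)^2)" .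
qed

theorem mainTheorem4:
  fixes d :: nat and Mstar M Zh Xh :: "real mat" and u zh xh :: "real vec"
    and \<rho> :: real and J :: "nat set"
  assumes d2: "d \<ge> 2"
    and Mstar: "Mstar \<in> carrier_mat d d" "transpose_mat Mstar = Mstar"
    and gap_star: "lam 1 Mstar > lam 2 Mstar"
    and u: "u \<in> carrier_vec d" "u \<bullet> u = 1" "Mstar *\<^sub>v u = lam 1 Mstar \<cdot>\<^sub>v u"
    and J: "J = {i. i < d \<and> u $ i \<noteq> 0}" and s2: "card J \<ge> 2"
    and M: "M \<in> carrier_mat d d" "transpose_mat M = M"
    and rho: "\<rho> > 0"
    and zh: "zh = vec (card J) (\<lambda>k. sgn (u $ pick J k))"
    and xh: "xh \<in> carrier_vec (card J)" "xh \<bullet> xh = 1"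
      "(submatrix M J J - \<rho> \<cdot>\<^sub>m outer zh) *\<^sub>v xh
         = lam 1 (submatrix M J J - \<rho> \<cdot>\<^sub>m outer zh) \<cdot>\<^sub>v xh"
    and Zh: "Zh \<in> carrier_mat d d" "transpose_mat Zh = Zh" "submatrix Zh J J = outer zh"
    and c1: "(\<forall>k < card J. sgn (u $ pick J k) = sgn (xh $ k))
           \<or> (\<forall>k < card J. sgn (u $ pick J k) = - sgn (xh $ k))"
    and c2: "(submatrix M ({0..<d} - J) J - \<rho> \<cdot>\<^sub>m submatrix Zh ({0..<d} - J) J) *\<^sub>v xh
               = 0\<^sub>v (d - card J)"
      "\<forall>i < d. \<forall>j < d. i \<notin> J \<longrightarrow> j \<in> J \<longrightarrow> \<bar>Zh $$ (i,j)\<bar> < 1"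
    and c3: "lam 1 (submatrix M J J - \<rho> \<cdot>\<^sub>m outer zh) = lam 1 (M - \<rho> \<cdot>\<^sub>m Zh)"
      "\<forall>i < d. \<forall>j < d. i \<notin> J \<longrightarrow> j \<notin> J \<longrightarrow> \<bar>Zh $$ (i,j)\<bar> < 1"
    and c4: "lam 1 (submatrix M J J - \<rho> \<cdot>\<^sub>m outer zh)
               > lam 2 (submatrix M J J - \<rho> \<cdot>\<^sub>m outer zh)"
    and Xh: "Xh \<in> carrier_mat d d" "submatrix Xh J J = outer xh"
      "\<forall>i < d. \<forall>j < d. i \<notin> J \<or> j \<notin> J \<longrightarrow> Xh $$ (i,j) = 0"
  shows "sdp_unique_opt d M \<rho> Xh \<and> {i. i < d \<and> Xh $$ (i,i) \<noteq> 0} = J"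
proof -
  define s where "s = card J"
  define p where "p = pick J"
  have Jsub: "J \<subseteq> {..<d}" using J by auto
  have fin: "finite J" using Jsub finite_subset by blast
  have s2': "s \<ge> 2" using s2 unfolding s_def .
  hence spos: "s > 0" by simp
  have dpos: "d > 0" using d2 by simp
  have cJ: "card {i. i < d \<and> i \<in> J} = s"
  proof -
    have "{i. i < d \<and> i \<in> J} = J" using Jsub by auto
    thus ?thesis unfolding s_def by simp
  qed
  have pin: "\<And>k. k < s \<Longrightarrow> p k \<in> J" using pick_facts(1)[OF fin] unfolding s_def p_def .
  have pd: "\<And>k. k < s \<Longrightarrow> p k < d" using pin Jsub by auto
  have idx: "\<And>i. i \<in> J \<Longrightarrow> card {a\<in>J. a < i} < s \<and> p (card {a\<in>J. a < i}) = i"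
    using pick_facts(5)[OF fin] unfolding s_def p_def .
  have idxp: "\<And>k. k < s \<Longrightarrow> card {a\<in>J. a < p k} = k"
    using pick_facts(4)[OF fin] unfolding s_def p_def .
  have sJ: "\<And>g. (\<forall>i<d. i \<notin> J \<longrightarrow> g i = 0) \<Longrightarrow> (\<Sum>i<d. g i) = (\<Sum>k<s. g (p k))"
    using sum_J[OF fin Jsub] unfolding s_def p_def by blast
  have sJ2: "\<And>f. (\<forall>i<d. \<forall>j<d. i \<notin> J \<or> j \<notin> J \<longrightarrow> f i j = 0) \<Longrightarrow>
      (\<Sum>i<d. \<Sum>j<d. f i j) = (\<Sum>k<s. \<Sum>l<s. f (p k) (p l))"
    using sum_J2[OF fin Jsub] unfolding s_def p_def by blast
  have uJ: "\<And>k. k < s \<Longrightarrow> u $ p k \<noteq> 0" using pin J by auto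
  have zh_dim: "dim_vec zh = s" unfolding zh s_def by simp
  have zh_idx: "\<And>k. k < s \<Longrightarrow> zh $ k = sgn (u $ p k)" unfolding zh s_def p_def by simp
  have zh_abs: "\<And>k. k < s \<Longrightarrow> \<bar>zh $ k\<bar> = 1" using zh_idx uJ by (simp add: abs_sgn_eq_1)
  have xh_dim: "dim_vec xh = s" using xh(1) unfolding s_def by simp
  have xhc: "xh \<in> carrier_vec s" using xh(1) unfolding s_def .
  have c1': "(\<forall>k<s. zh $ k = sgn (xh $ k)) \<or> (\<forall>k<s. zh $ k = - sgn (xh $ k))"
    using c1 zh_idx unfolding s_def p_def by auto
  have xh_nz: "\<And>k. k < s \<Longrightarrow> xh $ k \<noteq> 0"
  proof -
    fix k assume k: "k < s"
    have "zh $ k \<noteq> 0" using zh_abs[OF k] by auto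
    thus "xh $ k \<noteq> 0" using c1' k by auto
  qed
  obtain \<epsilon> :: real where eps: "\<epsilon> * \<epsilon> = 1" "\<And>k. k < s \<Longrightarrow> zh $ k * xh $ k = \<epsilon> * \<bar>xh $ k\<bar>"
  proof (cases "\<forall>k<s. zh $ k = sgn (xh $ k)")
    case True
    show ?thesis by (rule that[of 1]) (use True in \<open>auto simp: sgn_mul_self\<close>)
  next
    case False
    hence "\<forall>k<s. zh $ k = - sgn (xh $ k)" using c1' by blast
    show ?thesis by (rule that[of "-1"]) (use \<open>\<forall>k<s. zh $ k = - sgn (xh $ k)\<close> in \<open>auto simp: sgn_mul_self\<close>)
  qed
  have absxx: "\<And>k l. k < s \<Longrightarrow> l < s \<Longrightarrow> \<bar>xh $ k * xh $ l\<bar> = zh $ k * zh $ l * (xh $ k * xh $ l)"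
  proof -
    fix k l assume kl: "k < s" "l < s"
    have "zh $ k * zh $ l * (xh $ k * xh $ l) = (zh $ k * xh $ k) * (zh $ l * xh $ l)" by simp
    also have "\<dots> = (\<epsilon> * \<epsilon>) * (\<bar>xh $ k\<bar> * \<bar>xh $ l\<bar>)" using eps(2) kl by simp
    finally show "\<bar>xh $ k * xh $ l\<bar> = zh $ k * zh $ l * (xh $ k * xh $ l)" using eps(1) by (simp add: abs_mult)
  qed
  have outer_idx: "\<And>v k l. k < dim_vec v \<Longrightarrow> l < dim_vec v \<Longrightarrow> outer v $$ (k,l) = v $ k * v $ l"
    unfolding outer_def by simp
  have outer_car: "\<And>v. outer v \<in> carrier_mat (dim_vec v) (dim_vec v)" unfolding outer_def by simp
  have Zh_J: "\<And>k l. k < s \<Longrightarrow> l < s \<Longrightarrow> Zh $$ (p k, p l) = zh $ k * zh $ l"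
  proof -
    fix k l assume kl: "k < s" "l < s"
    have "submatrix Zh J J $$ (k,l) = Zh $$ (p k, p l)"
      unfolding p_def by (rule submatrix_index) (use kl Zh(1) cJ in auto)
    moreover have "submatrix Zh J J $$ (k,l) = zh $ k * zh $ l"
      unfolding Zh(3) using kl zh_dim outer_idx by simp
    ultimately show "Zh $$ (p k, p l) = zh $ k * zh $ l" by simp
  qed
  have Xh_J: "\<And>k l. k < s \<Longrightarrow> l < s \<Longrightarrow> Xh $$ (p k, p l) = xh $ k * xh $ l"
  proof -
    fix k l assume kl: "k < s" "l < s"
    have "submatrix Xh J J $$ (k,l) = Xh $$ (p k, p l)"
      unfolding p_def by (rule submatrix_index) (use kl Xh(1) cJ in auto)
    moreover have "submatrix Xh J J $$ (k,l) = xh $ k * xh $ l"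
      unfolding Xh(2) using kl xh_dim outer_idx by simp
    ultimately show "Xh $$ (p k, p l) = xh $ k * xh $ l" by simp
  qed
  have Msym: "\<And>i j. i < d \<Longrightarrow> j < d \<Longrightarrow> M $$ (i,j) = M $$ (j,i)"
    using symf_mat[OF M] unfolding symf_def by blast
  have Zsym: "\<And>i j. i < d \<Longrightarrow> j < d \<Longrightarrow> Zh $$ (i,j) = Zh $$ (j,i)"
    using symf_mat[OF Zh(1,2)] unfolding symf_def by blast
  have Zh_lt1: "\<And>i j. i < d \<Longrightarrow> j < d \<Longrightarrow> \<not> (i \<in> J \<and> j \<in> J) \<Longrightarrow> \<bar>Zh $$ (i,j)\<bar> < 1"
  proof -
    fix i j assume ij: "i < d" "j < d" "\<not> (i \<in> J \<and> j \<in> J)"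
    show "\<bar>Zh $$ (i,j)\<bar> < 1"
    proof (cases "i \<in> J")
      case True
      hence "j \<notin> J" using ij by auto
      thus ?thesis using c2(2) ij True Zsym[OF ij(1,2)] by auto
    next
      case False
      thus ?thesis using c2(2) c3(2) ij by (cases "j \<in> J") auto
    qed
  qed
  have Zh_le1: "\<And>i j. i < d \<Longrightarrow> j < d \<Longrightarrow> \<bar>Zh $$ (i,j)\<bar> \<le> 1"
  proof -
    fix i j assume ij: "i < d" "j < d"
    show "\<bar>Zh $$ (i,j)\<bar> \<le> 1"
    proof (cases "i \<in> J \<and> j \<in> J")
      case True
      then obtain k l where kl: "k < s" "l < s" "i = p k" "j = p l" using idx by metis
      thus ?thesis using Zh_J zh_abs by (simp add: abs_mult)
    qed (use Zh_lt1 ij in force)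
  qed
  define A where "A = submatrix M J J - \<rho> \<cdot>\<^sub>m outer zh"
  have subM: "submatrix M J J \<in> carrier_mat s s"
    unfolding carrier_mat_def using dim_submatrix[of M J J] M(1) cJ by auto
  have A: "A \<in> carrier_mat s s" unfolding A_def using subM outer_car[of zh] zh_dim by auto
  have A_idx: "\<And>k l. k < s \<Longrightarrow> l < s \<Longrightarrow> A $$ (k,l) = M $$ (p k, p l) - \<rho> * (zh $ k * zh $ l)"
  proof -
    fix k l assume kl: "k < s" "l < s"
    have "submatrix M J J $$ (k,l) = M $$ (p k, p l)"
      unfolding p_def by (rule submatrix_index) (use kl M(1) cJ in auto)
    thus "A $$ (k,l) = M $$ (p k, p l) - \<rho> * (zh $ k * zh $ l)"
      unfolding A_def using kl subM outer_car[of zh] zh_dim outer_idx by simp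
  qed
  have Asym: "transpose_mat A = A"
  proof (rule eq_matI)
    fix k l assume "k < dim_row A" "l < dim_col A"
    hence kl: "k < s" "l < s" using A by auto
    show "transpose_mat A $$ (k,l) = A $$ (k,l)"
      using kl A A_idx Msym[OF pd pd] by simp
  qed (use A in auto)
  define B where "B = M - \<rho> \<cdot>\<^sub>m Zh"
  have B: "B \<in> carrier_mat d d" unfolding B_def using M(1) Zh(1) by auto
  have B_idx: "\<And>i j. i < d \<Longrightarrow> j < d \<Longrightarrow> B $$ (i,j) = M $$ (i,j) - \<rho> * Zh $$ (i,j)"
    unfolding B_def using M(1) Zh(1) by simp
  have Bsym: "transpose_mat B = B"
  proof (rule eq_matI)
    fix i j assume "i < dim_row B" "j < dim_col B"
    hence ij: "i < d" "j < d" using B by auto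
    show "transpose_mat B $$ (i,j) = B $$ (i,j)"
      using ij B B_idx Msym Zsym by simp
  qed (use B in auto)
  define lm where "lm = lam 1 A"
  have lmB: "lam 1 B = lm" unfolding lm_def A_def B_def using c3(1) by simp
  have BJ: "\<And>k l. k < s \<Longrightarrow> l < s \<Longrightarrow> B $$ (p k, p l) = A $$ (k,l)"
    using B_idx A_idx Zh_J pd by simp
  have xhA: "A *\<^sub>v xh = lm \<cdot>\<^sub>v xh" using xh(3) unfolding A_def lm_def .
  have xh1: "(\<Sum>k<s. (xh $ k)^2) = 1" using xh(2) sp_sum[OF xh(1), of xh] unfolding s_def
    by (simp add: power2_eq_square)
  have rqA: "\<And>g. qf s (\<lambda>i j. A $$ (i,j)) g \<le> lm * (\<Sum>i<s. (g i)^2)"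
    using rq_lam1[OF A Asym spos] unfolding lm_def .
  have rqB: "\<And>g. qf d (\<lambda>i j. B $$ (i,j)) g \<le> lm * (\<Sum>i<d. (g i)^2)"
    using rq_lam1[OF B Bsym dpos] unfolding lmB .
  have Xh0: "\<And>i j. i < d \<Longrightarrow> j < d \<Longrightarrow> i \<notin> J \<or> j \<notin> J \<Longrightarrow> Xh $$ (i,j) = 0"
    using Xh(3) by blast
  have Xh_sym: "transpose_mat Xh = Xh"
  proof (rule eq_matI)
    fix i j assume "i < dim_row Xh" "j < dim_col Xh"
    hence ij: "i < d" "j < d" using Xh(1) by auto
    have "Xh $$ (j,i) = Xh $$ (i,j)"
    proof (cases "i \<in> J \<and> j \<in> J")
      case True
      then obtain k l where kl: "k < s" "l < s" "i = p k" "j = p l" using idx by metis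
      thus ?thesis using Xh_J by simp
    next
      case False thus ?thesis using Xh0 ij by auto
    qed
    thus "transpose_mat Xh $$ (i,j) = Xh $$ (i,j)" using ij Xh(1) by simp
  qed (use Xh(1) in auto)
  have Xh_psd: "psd Xh"
    unfolding psd_def
  proof
    fix v :: "real vec" assume "v \<in> carrier_vec (dim_row Xh)"
    hence v: "v \<in> carrier_vec d" using Xh(1) by simp
    have "v \<bullet> (Xh *\<^sub>v v) = qf d (\<lambda>i j. Xh $$ (i,j)) (\<lambda>i. v $ i)" by (rule quad_qf[OF Xh(1) v])
    also have "\<dots> = (\<Sum>k<s. \<Sum>l<s. v $ p k * Xh $$ (p k, p l) * v $ p l)"
      unfolding qf_def by (rule sJ2) (use Xh0 in auto)
    also have "\<dots> = (\<Sum>k<s. \<Sum>l<s. (v $ p k * xh $ k) * (xh $ l * v $ p l))"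
      using Xh_J by (intro sum.cong refl) simp
    also have "\<dots> = (\<Sum>k<s. v $ p k * xh $ k) * (\<Sum>l<s. xh $ l * v $ p l)" by (rule sum_product[symmetric])
    also have "\<dots> = (\<Sum>k<s. v $ p k * xh $ k)^2" by (simp add: power2_eq_square mult.commute)
    finally show "0 \<le> v \<bullet> (Xh *\<^sub>v v)" by simp
  qed
  have Xh_tr: "mtrace Xh = 1"
  proof -
    have "mtrace Xh = (\<Sum>i<d. Xh $$ (i,i))" unfolding mtrace_def using Xh(1) by simp
    also have "\<dots> = (\<Sum>k<s. Xh $$ (p k, p k))" by (rule sJ) (use Xh0 in auto)
    also have "\<dots> = (\<Sum>k<s. (xh $ k)^2)" using Xh_J by (simp add: power2_eq_square)
    finally show ?thesis using xh1 by simp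
  qed
  have Xh_feas: "sdp_feasible d Xh" unfolding sdp_feasible_def using Xh(1) Xh_sym Xh_psd Xh_tr by simp
  have Xh_obj: "sdp_obj M \<rho> Xh = lm"
  proof -
    have f: "frob_inner M Xh = (\<Sum>k<s. \<Sum>l<s. M $$ (p k, p l) * (xh $ k * xh $ l))"
    proof -
      have "frob_inner M Xh = (\<Sum>i<d. \<Sum>j<d. M $$ (i,j) * Xh $$ (i,j))" unfolding frob_inner_def using M(1) by simp
      also have "\<dots> = (\<Sum>k<s. \<Sum>l<s. M $$ (p k, p l) * Xh $$ (p k, p l))" by (rule sJ2) (use Xh0 in auto)
      finally show ?thesis using Xh_J by simp
    qed
    have n: "norm11 Xh = (\<Sum>k<s. \<Sum>l<s. zh $ k * zh $ l * (xh $ k * xh $ l))"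
    proof -
      have "norm11 Xh = (\<Sum>i<d. \<Sum>j<d. \<bar>Xh $$ (i,j)\<bar>)" unfolding norm11_def using Xh(1) by simp
      also have "\<dots> = (\<Sum>k<s. \<Sum>l<s. \<bar>Xh $$ (p k, p l)\<bar>)" by (rule sJ2) (use Xh0 in auto)
      also have "\<dots> = (\<Sum>k<s. \<Sum>l<s. \<bar>xh $ k * xh $ l\<bar>)" using Xh_J by simp
      finally show ?thesis using absxx by simp
    qed
    have "sdp_obj M \<rho> Xh = (\<Sum>k<s. \<Sum>l<s. M $$ (p k, p l) * (xh $ k * xh $ l) - \<rho> * (zh $ k * zh $ l * (xh $ k * xh $ l)))"
      unfolding sdp_obj_def f n by (simp add: sum_subtractf sum_distrib_left)
    also have "\<dots> = (\<Sum>k<s. \<Sum>l<s. xh $ k * A $$ (k,l) * xh $ l)"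
      by (intro sum.cong refl) (simp add: A_idx algebra_simps)
    also have "\<dots> = xh \<bullet> (A *\<^sub>v xh)" unfolding quad_qf[OF A xhc] qf_def ..
    also have "\<dots> = lm * (xh \<bullet> xh)" unfolding xhA using xh(1) by simp
    finally show ?thesis using xh(2) by simp
  qed
  have diag: "{i. i < d \<and> Xh $$ (i,i) \<noteq> 0} = J"
  proof (intro equalityI subsetI)
    fix i assume "i \<in> {i. i < d \<and> Xh $$ (i,i) \<noteq> 0}"
    thus "i \<in> J" using Xh0 by auto
  next
    fix i assume i: "i \<in> J"
    then obtain k where k: "k < s" "i = p k" using idx by metis
    have "Xh $$ (i,i) = xh $ k * xh $ k" using Xh_J k by simp
    thus "i \<in> {i. i < d \<and> Xh $$ (i,i) \<noteq> 0}" using xh_nz[OF k(1)] i Jsub by auto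
  qed
  have F3: "\<And>Y. sdp_feasible d Y \<Longrightarrow> sdp_obj M \<rho> Y \<le> lm \<and> (sdp_obj M \<rho> Y = lm \<longrightarrow> Y = Xh)"
  proof -
    fix Y assume feas: "sdp_feasible d Y"
    have Yc: "Y \<in> carrier_mat d d" and YT: "transpose_mat Y = Y" and Ypsd: "psd Y" and Ytr: "mtrace Y = 1"
      using feas unfolding sdp_feasible_def by auto
    define Yf where "Yf i j = Y $$ (i,j)" for i j
    have symY: "symf d Yf" unfolding Yf_def by (rule symf_mat[OF Yc YT])
    have psdY: "\<forall>v. 0 \<le> qf d Yf v"
    proof
      fix v :: "nat \<Rightarrow> real"
      have vc: "vec d v \<in> carrier_vec d" by simp
      have "0 \<le> vec d v \<bullet> (Y *\<^sub>v vec d v)" using Ypsd Yc vc unfolding psd_def by auto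
      also have "\<dots> = qf d (\<lambda>i j. Y $$ (i,j)) (\<lambda>i. vec d v $ i)" by (rule quad_qf[OF Yc vc])
      also have "\<dots> = qf d Yf v" unfolding Yf_def by (rule qf_cong) simp
      finally show "0 \<le> qf d Yf v" .
    qed
    have trY: "(\<Sum>i<d. Yf i i) = 1" using Ytr Yc unfolding mtrace_def Yf_def by simp
    obtain K :: nat and V where V: "\<forall>i<d. \<forall>j<d. Yf i j = (\<Sum>m<K. V m i * V m j)"
      using psd_decomp[OF symY psdY] by blast
    define frobB where "frobB = (\<Sum>i<d. \<Sum>j<d. B $$ (i,j) * Yf i j)"
    have frobB_le: "frobB \<le> lm"
    proof -
      have "frobB = (\<Sum>m<K. qf d (\<lambda>i j. B $$ (i,j)) (V m))" unfolding frobB_def by (rule frob_decomp(1)[OF V])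
      also have "\<dots> \<le> (\<Sum>m<K. lm * (\<Sum>i<d. (V m i)^2))" by (rule sum_mono) (rule rqB)
      also have "\<dots> = lm * (\<Sum>i<d. Yf i i)" unfolding frob_decomp(2)[OF V] by (simp add: sum_distrib_left)
      finally show ?thesis using trY by simp
    qed
    define T where "T i j = \<bar>Yf i j\<bar> - Zh $$ (i,j) * Yf i j" for i j
    have T0: "\<And>i j. i < d \<Longrightarrow> j < d \<Longrightarrow> 0 \<le> T i j"
    proof -
      fix i j assume ij: "i < d" "j < d"
      have "\<bar>Zh $$ (i,j) * Yf i j\<bar> = \<bar>Zh $$ (i,j)\<bar> * \<bar>Yf i j\<bar>" by (simp add: abs_mult)
      also have "\<dots> \<le> 1 * \<bar>Yf i j\<bar>" using Zh_le1[OF ij] by (intro mult_right_mono) auto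
      finally have a: "\<bar>Zh $$ (i,j) * Yf i j\<bar> \<le> \<bar>Yf i j\<bar>" by simp
      have "Zh $$ (i,j) * Yf i j \<le> \<bar>Zh $$ (i,j) * Yf i j\<bar>" by (rule abs_ge_self)
      thus "0 \<le> T i j" unfolding T_def using a by linarith
    qed
    have objY: "sdp_obj M \<rho> Y = frobB - \<rho> * (\<Sum>i<d. \<Sum>j<d. T i j)"
    proof -
      have "frobB - \<rho> * (\<Sum>i<d. \<Sum>j<d. T i j) = (\<Sum>i<d. \<Sum>j<d. B $$ (i,j) * Yf i j - \<rho> * T i j)"
        unfolding frobB_def by (simp add: sum_subtractf sum_distrib_left)
      also have "\<dots> = (\<Sum>i<d. \<Sum>j<d. M $$ (i,j) * Y $$ (i,j) - \<rho> * \<bar>Y $$ (i,j)\<bar>)"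
        by (intro sum.cong refl) (simp add: B_idx T_def Yf_def algebra_simps)
      also have "\<dots> = sdp_obj M \<rho> Y"
        unfolding sdp_obj_def frob_inner_def norm11_def using Yc M(1) by (simp add: sum_subtractf sum_distrib_left)
      finally show ?thesis by simp
    qed
    have sT: "0 \<le> (\<Sum>i<d. \<Sum>j<d. T i j)" by (auto intro!: sum_nonneg T0)
    have rT: "0 \<le> \<rho> * (\<Sum>i<d. \<Sum>j<d. T i j)" using rho sT by simp
    have le: "sdp_obj M \<rho> Y \<le> lm" using objY frobB_le rT by linarith
    moreover have "sdp_obj M \<rho> Y = lm \<longrightarrow> Y = Xh"
    proof
      assume eq: "sdp_obj M \<rho> Y = lm"
      have fB: "frobB = lm" and rT0: "\<rho> * (\<Sum>i<d. \<Sum>j<d. T i j) = 0"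
        using objY frobB_le rT eq by linarith+
      hence sT0: "(\<Sum>i<d. \<Sum>j<d. T i j) = 0" using rho by simp
      have Tz: "\<And>i j. i < d \<Longrightarrow> j < d \<Longrightarrow> T i j = 0"
      proof -
        fix i j assume ij: "i < d" "j < d"
        have inn: "\<forall>i\<in>{..<d}. (\<Sum>j<d. T i j) = 0"
          using sT0 by (subst (asm) sum_nonneg_eq_0_iff) (auto intro!: sum_nonneg T0)
        hence "(\<Sum>j<d. T i j) = 0" using ij by simp
        hence "\<forall>j\<in>{..<d}. T i j = 0" using ij by (subst (asm) sum_nonneg_eq_0_iff) (auto intro!: T0)
        thus "T i j = 0" using ij by simp
      qed
      have Yzero: "\<And>i j. i < d \<Longrightarrow> j < d \<Longrightarrow> \<not> (i \<in> J \<and> j \<in> J) \<Longrightarrow> Yf i j = 0"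
      proof (rule ccontr)
        fix i j assume ij: "i < d" "j < d" "\<not> (i \<in> J \<and> j \<in> J)" and nz: "Yf i j \<noteq> 0"
        have "\<bar>Yf i j\<bar> = Zh $$ (i,j) * Yf i j" using Tz[OF ij(1,2)] unfolding T_def by simp
        also have "\<dots> \<le> \<bar>Zh $$ (i,j) * Yf i j\<bar>" by simp
        also have "\<dots> = \<bar>Zh $$ (i,j)\<bar> * \<bar>Yf i j\<bar>" by (simp add: abs_mult)
        also have "\<dots> < 1 * \<bar>Yf i j\<bar>" using Zh_lt1[OF ij] nz by (intro mult_strict_right_mono) auto
        finally show False by simp
      qed
      define Y' where "Y' k l = Yf (p k) (p l)" for k l
      have frobA: "(\<Sum>k<s. \<Sum>l<s. A $$ (k,l) * Y' k l) = lm"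
      proof -
        have "frobB = (\<Sum>k<s. \<Sum>l<s. B $$ (p k, p l) * Yf (p k) (p l))"
          unfolding frobB_def by (rule sJ2) (use Yzero in auto)
        also have "\<dots> = (\<Sum>k<s. \<Sum>l<s. A $$ (k,l) * Y' k l)"
          unfolding Y'_def by (intro sum.cong refl) (simp add: BJ)
        finally show ?thesis using fB by simp
      qed
      have symY': "symf s Y'" unfolding symf_def
      proof (intro allI impI)
        fix k l assume kl: "k < s" "l < s"
        hence "p k < d" "p l < d" using pd by auto
        thus "Y' k l = Y' l k" unfolding Y'_def using symY unfolding symf_def by blast
      qed
      have psdY': "\<forall>g. 0 \<le> qf s Y' g"
      proof
        fix g :: "nat \<Rightarrow> real"
        define v where "v i = (if i \<in> J then g (card {a\<in>J. a < i}) else 0)" for i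
        have vp: "\<And>k. k < s \<Longrightarrow> v (p k) = g k" unfolding v_def using pin idxp by simp
        have "qf d Yf v = (\<Sum>k<s. \<Sum>l<s. v (p k) * Yf (p k) (p l) * v (p l))"
          unfolding qf_def by (rule sJ2) (auto simp: v_def)
        also have "\<dots> = qf s Y' g" unfolding qf_def Y'_def by (intro sum.cong refl) (simp add: vp)
        finally show "0 \<le> qf s Y' g" using psdY by metis
      qed
      have trY': "(\<Sum>k<s. Y' k k) = 1"
      proof -
        have "(\<Sum>i<d. Yf i i) = (\<Sum>k<s. Yf (p k) (p k))" by (rule sJ) (use Yzero in auto)
        thus ?thesis using trY unfolding Y'_def by simp
      qed
      obtain K2 :: nat and W where W: "\<forall>k<s. \<forall>l<s. Y' k l = (\<Sum>m<K2. W m k * W m l)"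
        using psd_decomp[OF symY' psdY'] by blast
      define Cf where "Cf k l = lm * (if k = l then 1 else 0) - A $$ (k,l)" for k l
      have symC: "symf s Cf" using symf_mat[OF A Asym] unfolding symf_def Cf_def by auto
      have psdC: "\<forall>g. 0 \<le> qf s Cf g" unfolding Cf_def qf_diag_minus using rqA by simp
      have "(\<Sum>m<K2. qf s Cf (W m)) = lm * (\<Sum>m<K2. \<Sum>k<s. (W m k)^2) - (\<Sum>m<K2. qf s (\<lambda>i j. A $$ (i,j)) (W m))"
        unfolding Cf_def qf_diag_minus by (simp add: sum_subtractf sum_distrib_left)
      also have "\<dots> = lm * (\<Sum>k<s. Y' k k) - (\<Sum>k<s. \<Sum>l<s. A $$ (k,l) * Y' k l)"
        unfolding frob_decomp(1)[OF W] frob_decomp(2)[OF W] ..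
      also have "\<dots> = 0" using trY' frobA by simp
      finally have sC: "(\<Sum>m<K2. qf s Cf (W m)) = 0" .
      have Wz: "\<And>m. m < K2 \<Longrightarrow> qf s Cf (W m) = 0"
        using sC psdC by (subst (asm) sum_nonneg_eq_0_iff) auto
      have Wev: "\<And>m. m < K2 \<Longrightarrow> \<forall>k<s. (\<Sum>l<s. A $$ (k,l) * W m l) = lm * W m k"
      proof (intro allI impI)
        fix m k assume m: "m < K2" and k: "k < s"
        have "(\<Sum>l<s. Cf k l * W m l) = 0" using psd_null[OF symC psdC Wz[OF m]] k by blast
        moreover have "(\<Sum>l<s. Cf k l * W m l) = (\<Sum>l<s. (if l = k then lm * W m k else 0)) - (\<Sum>l<s. A $$ (k,l) * W m l)"
          unfolding Cf_def sum_subtractf[symmetric] by (intro sum.cong) (auto simp: algebra_simps)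
        ultimately show "(\<Sum>l<s. A $$ (k,l) * W m l) = lm * W m k" using k by simp
      qed
      have xhev: "\<forall>k<s. (\<Sum>l<s. A $$ (k,l) * xh $ l) = lm * xh $ k" by (rule ev_fun[OF A xhc xhA])
      have Wpar: "\<And>m k. m < K2 \<Longrightarrow> k < s \<Longrightarrow> W m k = (\<Sum>l<s. W m l * xh $ l) * xh $ k"
      proof (rule ccontr)
        fix m k assume m: "m < K2" and k: "k < s" and neq: "W m k \<noteq> (\<Sum>l<s. W m l * xh $ l) * xh $ k"
        define c where "c = (\<Sum>l<s. W m l * xh $ l)"
        define w where "w = vec s (\<lambda>l. W m l - c * xh $ l)"
        have wc: "w \<in> carrier_vec s" unfolding w_def by simp
        have wA: "A *\<^sub>v w = lm \<cdot>\<^sub>v w"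
        proof (rule eq_vecI)
          fix r assume "r < dim_vec (lm \<cdot>\<^sub>v w)"
          hence r: "r < s" using wc by simp
          have "(A *\<^sub>v w) $ r = (\<Sum>l<s. A $$ (r,l) * w $ l)" by (rule mv_index[OF A wc r])
          also have "\<dots> = (\<Sum>l<s. A $$ (r,l) * W m l) - c * (\<Sum>l<s. A $$ (r,l) * xh $ l)"
            unfolding w_def by (simp add: sum_distrib_left sum_subtractf[symmetric] algebra_simps)
          also have "\<dots> = lm * (W m r - c * xh $ r)" using Wev[OF m] xhev r by (simp add: algebra_simps)
          also have "\<dots> = (lm \<cdot>\<^sub>v w) $ r" unfolding w_def using r by simp
          finally show "(A *\<^sub>v w) $ r = (lm \<cdot>\<^sub>v w) $ r" .
        qed (use A wc in auto)
        have xw: "xh \<bullet> w = 0"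
        proof -
          have "xh \<bullet> w = (\<Sum>l<s. xh $ l * (W m l - c * xh $ l))" unfolding sp_sum[OF wc] unfolding w_def by simp
          also have "\<dots> = (\<Sum>l<s. W m l * xh $ l) - c * (\<Sum>l<s. (xh $ l)^2)"
            by (simp add: sum_subtractf sum_distrib_left algebra_simps power2_eq_square)
          also have "\<dots> = c - c * (\<Sum>l<s. (xh $ l)^2)" unfolding c_def ..
          finally show ?thesis using xh1 by simp
        qed
        have wk: "w $ k \<noteq> 0" unfolding w_def using k neq c_def by simp
        have ww: "w \<bullet> w \<noteq> 0"
        proof -
          have "(w $ k)^2 \<le> (\<Sum>l<s. (w $ l)^2)" by (rule member_le_sum) (use k in auto)
          moreover have "w \<bullet> w = (\<Sum>l<s. (w $ l)^2)" unfolding sp_sum[OF wc] by (simp add: power2_eq_square)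
          moreover have "(w $ k)^2 > 0" using wk by simp
          ultimately have "w \<bullet> w > 0" by linarith
          thus ?thesis by simp
        qed
        have xx: "xh \<bullet> xh \<noteq> 0" using xh(2) by simp
        have "count (proots (char_poly A)) lm \<ge> 2" by (rule mult2[OF A xhc wc xhA wA xx ww xw])
        hence "lam 2 A = lam 1 A" using lam2_eq[OF A] unfolding lm_def by simp
        thus False using c4 unfolding A_def by simp
      qed
      define cs where "cs = (\<Sum>m<K2. (\<Sum>l<s. W m l * xh $ l)^2)"
      have Y'x: "\<And>k l. k < s \<Longrightarrow> l < s \<Longrightarrow> Y' k l = cs * (xh $ k * xh $ l)"
      proof -
        fix k l assume kl: "k < s" "l < s"
        have "Y' k l = (\<Sum>m<K2. W m k * W m l)" using W kl by simp
        also have "\<dots> = (\<Sum>m<K2. (\<Sum>l<s. W m l * xh $ l)^2 * (xh $ k * xh $ l))"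
          using Wpar kl by (intro sum.cong refl) (simp add: power2_eq_square algebra_simps)
        also have "\<dots> = cs * (xh $ k * xh $ l)" unfolding cs_def by (simp add: sum_distrib_right)
        finally show "Y' k l = cs * (xh $ k * xh $ l)" .
      qed
      have cs1: "cs = 1"
      proof -
        have "(\<Sum>k<s. Y' k k) = (\<Sum>k<s. cs * (xh $ k)^2)" using Y'x by (simp add: power2_eq_square)
        also have "\<dots> = cs" using xh1 by (simp add: sum_distrib_left[symmetric])
        finally show ?thesis using trY' by simp
      qed
      show "Y = Xh"
      proof (rule eq_matI)
        fix i j assume "i < dim_row Xh" "j < dim_col Xh"
        hence ij: "i < d" "j < d" using Xh(1) by auto
        show "Y $$ (i,j) = Xh $$ (i,j)"
        proof (cases "i \<in> J \<and> j \<in> J")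
          case True
          then obtain k l where kl: "k < s" "l < s" "i = p k" "j = p l" using idx by metis
          have "Y $$ (i,j) = Y' k l" unfolding Y'_def Yf_def kl ..
          also have "\<dots> = xh $ k * xh $ l" using Y'x kl cs1 by simp
          also have "\<dots> = Xh $$ (i,j)" using Xh_J kl by simp
          finally show ?thesis .
        next
          case False
          thus ?thesis using Yzero[OF ij False] Xh0[OF ij] unfolding Yf_def by auto
        qed
      qed (use Yc Xh(1) in auto)
    qed
    ultimately show "sdp_obj M \<rho> Y \<le> lm \<and> (sdp_obj M \<rho> Y = lm \<longrightarrow> Y = Xh)" by blast
  qed
  have "sdp_unique_opt d M \<rho> Xh"
    unfolding sdp_unique_opt_def
  proof (intro conjI allI impI)
    show "sdp_feasible d Xh" by (rule Xh_feas)
    fix Y assume "sdp_feasible d Y \<and> Y \<noteq> Xh"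
    hence "sdp_obj M \<rho> Y \<le> lm" "sdp_obj M \<rho> Y \<noteq> lm" using F3 by blast+
    thus "sdp_obj M \<rho> Y < sdp_obj M \<rho> Xh" using Xh_obj by simp
  qed
  thus ?thesis using diag by simp
qed

end
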